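(* Let $\|\cdot\|^*$ be an algebra norm on $\mathbb{R}^n$, let $J:\mathbb{R}\to\mathbb{R}$ be continuous, and let $C,\delta>0$. Then there exists a real polynomial $P$ such that, for every $\phi\in\mathbb{R}^n$ with $\|\phi\|^*\le C$, we have $\|P\circ\phi-J\circ\phi\|_\infty\le\delta$ and $\|P\circ\phi\|^*\le\rho(C,\delta,J)$.
   Context: An algebra norm is a norm $N$ on $\mathbb{R}^n$ (functions on $\{1,\dots,n\}$) with $N(fg)\le N(f)N(g)$ (pointwise product) and $N(\mathbf 1)=1$. $\|f\|_\infty=\max_x|f(x)|$; $P\circ\phi$, $J\circ\phi$ are pointwise compositions. For a real polynomial $P(x)=\sum_ka_kx^k$, $R_P(x)=\sum_k|a_k|x^k$. For continuous $J$ and $C,\delta>0$, $\rho(C,\delta,J)$ is twice the infimum of $R_P(C)$ over all real polynomials $P$ with $|P(x)-J(x)|\le\delta$ for all $x\in[-C,C]$. *)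

theory Defs
  imports Complex_Main "HOL-Computational_Algebra.Polynomial"
begin

text \<open>Functions on a finite index type 'n (playing the role of {1..n}) with pointwise
  operations.\<close>

definition algebra_norm :: "(('n::finite \<Rightarrow> real) \<Rightarrow> real) \<Rightarrow> bool" where
  "algebra_norm N \<longleftrightarrow>
     (\<forall>f. 0 \<le> N f) \<and>
     (\<forall>f. N f = 0 \<longleftrightarrow> f = (\<lambda>x. 0)) \<and>
     (\<forall>c f. N (\<lambda>x. c * f x) = \<bar>c\<bar> * N f) \<and>
     (\<forall>f g. N (\<lambda>x. f x + g x) \<le> N f + N g) \<and>
     (\<forall>f g. N (\<lambda>x. f x * g x) \<le> N f * N g) \<and>
     N (\<lambda>x. 1) = 1"

definition sup_norm :: "('n::finite \<Rightarrow> real) \<Rightarrow> real" where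
  "sup_norm f = Max (range (\<lambda>x. \<bar>f x\<bar>))"

definition R_poly :: "real poly \<Rightarrow> real \<Rightarrow> real" where
  "R_poly P x = (\<Sum>k\<le>degree P. \<bar>coeff P k\<bar> * x ^ k)"

definition rho :: "real \<Rightarrow> real \<Rightarrow> (real \<Rightarrow> real) \<Rightarrow> real" where
  "rho C \<delta> J = 2 * Inf {R_poly P C | P. \<forall>x\<in>{-C..C}. \<bar>poly P x - J x\<bar> \<le> \<delta>}"

end

theory Submission
  imports Defs "HOL-Analysis.Weierstrass_Theorems"
begin

lemma an_mult: "algebra_norm N \<Longrightarrow> N (\<lambda>x. f x * g x) \<le> N f * N g"
  unfolding algebra_norm_def by blast
lemma an_zero: "algebra_norm N \<Longrightarrow> N (\<lambda>x. 0) = 0"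
  unfolding algebra_norm_def by blast

lemma an_add: "algebra_norm N \<Longrightarrow> N (\<lambda>x. f x + g x) \<le> N f + N g"
  unfolding algebra_norm_def by blast
lemma an_scale: "algebra_norm N \<Longrightarrow> N (\<lambda>x. c * f x) = \<bar>c\<bar> * N f"
  unfolding algebra_norm_def by blast

lemma an_pow:
  assumes "algebra_norm N"
  shows "N (\<lambda>x. \<phi> x ^ k) \<le> N \<phi> ^ k"
proof (induction k)
  case 0 then show ?case using assms by (simp add: algebra_norm_def)
next
  case (Suc k)
  have "N (\<lambda>x. \<phi> x ^ Suc k) = N (\<lambda>x. \<phi> x * \<phi> x ^ k)" by simp
  also have "\<dots> \<le> N \<phi> * N (\<lambda>x. \<phi> x ^ k)" by (rule an_mult[OF assms])
  also have "\<dots> \<le> N \<phi> * N \<phi> ^ k"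
    using Suc assms by (intro mult_left_mono) (auto simp: algebra_norm_def)
  finally show ?case by simp
qed

lemma an_sum:
  assumes "algebra_norm N" "finite A"
  shows "N (\<lambda>x. \<Sum>k\<in>A. c k * \<phi> x ^ k) \<le> (\<Sum>k\<in>A. \<bar>c k\<bar> * N \<phi> ^ k)"
  using assms(2)
proof (induction A rule: finite_induct)
  case empty then show ?case using an_zero[OF assms(1)] by simp
next
  case (insert a A)
  have "N (\<lambda>x. \<Sum>k\<in>insert a A. c k * \<phi> x ^ k)
      = N (\<lambda>x. c a * \<phi> x ^ a + (\<Sum>k\<in>A. c k * \<phi> x ^ k))" using insert by simp
  also have "\<dots> \<le> N (\<lambda>x. c a * \<phi> x ^ a) + N (\<lambda>x. \<Sum>k\<in>A. c k * \<phi> x ^ k)"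
    by (rule an_add[OF assms(1)])
  also have "N (\<lambda>x. c a * \<phi> x ^ a) = \<bar>c a\<bar> * N (\<lambda>x. \<phi> x ^ a)"
    by (rule an_scale[OF assms(1)])
  also have "\<dots> \<le> \<bar>c a\<bar> * N \<phi> ^ a"
    using an_pow[OF assms(1)] by (intro mult_left_mono) auto
  finally show ?case using insert by simp
qed

lemma an_pt:
  assumes "algebra_norm N"
  shows "\<bar>\<phi> x\<bar> \<le> N \<phi>"
proof -
  define e where "e = (\<lambda>y. if y = x then (1::real) else 0)"
  have eq: "(\<lambda>y. e y * \<phi> y) = (\<lambda>y. \<phi> x * e y)" by (auto simp: e_def)
  have "e \<noteq> (\<lambda>y. 0)" by (metis e_def zero_neq_one)
  then have pos: "N e > 0" using assms unfolding algebra_norm_def by (metis order_le_less)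
  have "\<bar>\<phi> x\<bar> * N e = N (\<lambda>y. \<phi> x * e y)" using an_scale[OF assms] by simp
  also have "\<dots> = N (\<lambda>y. e y * \<phi> y)" using eq by simp
  also have "\<dots> \<le> N e * N \<phi>" by (rule an_mult[OF assms])
  finally show ?thesis using pos by (simp add: mult.commute)
qed

lemma poly_le_R:
  assumes "\<bar>x\<bar> \<le> C"
  shows "\<bar>poly Q x\<bar> \<le> R_poly Q C"
proof -
  have "\<bar>poly Q x\<bar> = \<bar>\<Sum>i\<le>degree Q. coeff Q i * x ^ i\<bar>" by (simp add: poly_altdef)
  also have "\<dots> \<le> (\<Sum>i\<le>degree Q. \<bar>coeff Q i * x ^ i\<bar>)" by (rule sum_abs)
  also have "\<dots> \<le> (\<Sum>i\<le>degree Q. \<bar>coeff Q i\<bar> * C ^ i)"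
    by (intro sum_mono) (auto simp: abs_mult power_abs intro!: mult_left_mono power_mono assms)
  finally show ?thesis by (simp add: R_poly_def)
qed

lemma R_nonneg: "C \<ge> 0 \<Longrightarrow> R_poly Q C \<ge> 0"
  unfolding R_poly_def by (intro sum_nonneg) auto

theorem lemma4p3:
  fixes N :: "('n::finite \<Rightarrow> real) \<Rightarrow> real"
    and J :: "real \<Rightarrow> real"
    and C \<delta> :: real
  assumes "algebra_norm N"
    and "continuous_on UNIV J"
    and "C > 0" and "\<delta> > 0"
  shows "\<exists>P :: real poly. \<forall>\<phi> :: 'n \<Rightarrow> real. N \<phi> \<le> C \<longrightarrow>
           sup_norm (\<lambda>x. poly P (\<phi> x) - J (\<phi> x)) \<le> \<delta> \<and>
           N (\<lambda>x. poly P (\<phi> x)) \<le> rho C \<delta> J"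
proof -
  define S where "S = {R_poly P C | P. \<forall>x\<in>{-C..C}. \<bar>poly P x - J x\<bar> \<le> \<delta>}"
  define m where "m = Inf S"
  have rho: "rho C \<delta> J = 2 * m" unfolding rho_def m_def S_def by simp
  obtain g where g: "real_polynomial_function g" "\<And>x. x \<in> {-C..C} \<Longrightarrow> \<bar>J x - g x\<bar> < \<delta>"
    using Stone_Weierstrass_real_polynomial_function[of "{-C..C}" J \<delta>] assms
    by (auto intro: continuous_on_subset)
  obtain a n where gs: "g = (\<lambda>x. \<Sum>i\<le>n. a i * x^i)"
    using g(1) real_polynomial_function_iff_sum by blast
  define Q0 where "Q0 = (\<Sum>i\<le>n. monom (a i) i)"
  have "poly Q0 x = g x" for x by (simp add: Q0_def gs poly_sum poly_monom)
  then have "R_poly Q0 C \<in> S" unfolding S_def using g(2) by (force simp: abs_minus_commute)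
  then have Sne: "S \<noteq> {}" by blast
  have bdd: "bdd_below S" unfolding S_def using R_nonneg assms(3)
    by (intro bdd_belowI[of _ 0]) auto
  have m0: "m \<ge> 0" unfolding m_def using Sne
    by (intro cInf_greatest) (auto simp: S_def intro: R_nonneg assms(3)[THEN less_imp_le])
  obtain P where P1: "\<forall>x\<in>{-C..C}. \<bar>poly P x - J x\<bar> \<le> \<delta>" and P2: "R_poly P C \<le> 2 * m"
  proof (cases "m > 0")
    case True
    then have "Inf S < 2 * m" by (simp add: m_def)
    then obtain r where "r \<in> S" "r < 2 * m" using cInf_lessD[OF Sne] by blast
    then show ?thesis using that unfolding S_def by force
  next
    case False
    then have mz: "m = 0" using m0 by simp
    have "\<bar>J x\<bar> \<le> \<delta>" if x: "x \<in> {-C..C}" for x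
    proof (rule ccontr)
      assume "\<not> \<bar>J x\<bar> \<le> \<delta>"
      then have "Inf S < \<bar>J x\<bar> - \<delta>" using mz m_def by simp
      then obtain r where "r \<in> S" "r < \<bar>J x\<bar> - \<delta>" using cInf_lessD[OF Sne] by blast
      then obtain Q where Q: "\<forall>x\<in>{-C..C}. \<bar>poly Q x - J x\<bar> \<le> \<delta>" "R_poly Q C < \<bar>J x\<bar> - \<delta>"
        unfolding S_def by blast
      have "\<bar>poly Q x\<bar> \<le> R_poly Q C" using x by (intro poly_le_R) auto
      moreover have "\<bar>poly Q x - J x\<bar> \<le> \<delta>" using Q x by blast
      ultimately show False using Q(2) by linarith
    qed
    moreover have "R_poly 0 C \<le> 2 * m" by (simp add: R_poly_def mz)
    ultimately show ?thesis using that[of 0] by simp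
  qed
  show ?thesis
  proof (intro exI allI impI conjI)
    fix \<phi> :: "'n \<Rightarrow> real"
    assume Nphi: "N \<phi> \<le> C"
    have inC: "\<phi> x \<in> {-C..C}" for x using an_pt[OF assms(1), of \<phi> x] Nphi by auto
    show "sup_norm (\<lambda>x. poly P (\<phi> x) - J (\<phi> x)) \<le> \<delta>"
      unfolding sup_norm_def using P1 inC by (subst Max_le_iff) auto
    have "N (\<lambda>x. poly P (\<phi> x)) = N (\<lambda>x. \<Sum>i\<le>degree P. coeff P i * \<phi> x ^ i)"
      by (simp add: poly_altdef)
    also have "\<dots> \<le> (\<Sum>i\<le>degree P. \<bar>coeff P i\<bar> * N \<phi> ^ i)" by (rule an_sum[OF assms(1)]) auto
    also have "\<dots> \<le> (\<Sum>i\<le>degree P. \<bar>coeff P i\<bar> * C ^ i)"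
      using assms(1) Nphi unfolding algebra_norm_def
      by (intro sum_mono mult_left_mono power_mono) auto
    also have "\<dots> \<le> rho C \<delta> J" using P2 rho by (simp add: R_poly_def)
    finally show "N (\<lambda>x. poly P (\<phi> x)) \<le> rho C \<delta> J" .
  qed
qed

end
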